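(* Let $\pi$ be an $r$-homogeneous strongly log-concave distribution with associated matroid $\mathcal{M}=(E,\mathcal{I})$ and weight function $w$, and let $I\in\mathcal{I}$ with $|I|\le r-2$. Let $f:E\setminus I\to\mathbb{R}$ be a function with $\mathbb{E}_{\pi_{I,1}}f=1$. Then $$f^{\top}W_I f\le w(I).$$
   Context: $\pi:2^{[n]}\to\mathbb{R}_{\ge0}$ has generating polynomial $g_\pi(x)=\sum_S\pi(S)\prod_{i\in S}x_i$; it is $r$-homogeneous if its support consists of $r$-sets; a polynomial with nonnegative coefficients is strongly log-concave if for every $J\subseteq[n]$, $\nabla^2\log(\partial_J p)$ is negative semidefinite at the all-ones vector; $\pi$ is strongly log-concave if $g_\pi$ is. The support $\mathcal{B}$ of such $\pi$ is the set of bases of a rank-$r$ matroid $\mathcal{M}=(E,\mathcal{I})$. Fix $Z_r>0$; weights: $w(I)=(r-|I|)!\,Z_r\sum_{B\in\mathcal{B},B\supseteq I}\pi(B)$ for $I\in\mathcal{I}$, and $w(I)=0$ for $I\notin\mathcal{I}$. The distribution $\pi_{I,1}$ on $E\setminus I$ is $\pi_{I,1}(v)=w(I\cup\{v\})/w(I)$ (supported on $v$ with $I\cup\{v\}\in\mathcal{I}$). $W_I$ is the matrix indexed by $E\setminus I$ with $(W_I)_{uv}=w(I\cup\{u,v\})$ for $u\ne v$ and zero diagonal. *)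

theory Defs
  imports Complex_Main
begin

text \<open>Ground set [n] = {1..n}. A function \<pi> on subsets of [n] is given as
  a function of type nat set => real; only its values on subsets of [n] matter.\<close>

definition ground :: "nat \<Rightarrow> nat set" where
  "ground n = {1..n}"

text \<open>Value at the all-ones vector of the partial derivative d_J g_pi
  (g_pi is multiaffine, so d_J g_pi = sum over S containing J of \<pi>(S) prod_{i in S-J} x_i).\<close>
definition derivJ :: "nat \<Rightarrow> (nat set \<Rightarrow> real) \<Rightarrow> nat set \<Rightarrow> real" where
  "derivJ n \<pi> J = (\<Sum>S\<in>{S. S \<subseteq> ground n \<and> J \<subseteq> S}. \<pi> S)"

definition grad1 :: "nat \<Rightarrow> (nat set \<Rightarrow> real) \<Rightarrow> nat set \<Rightarrow> nat \<Rightarrow> real" where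
  "grad1 n \<pi> J i = (if i \<in> J then 0 else derivJ n \<pi> (insert i J))"

text \<open>Hessian of d_J g_pi at the all-ones vector, (i,j) entry (multiaffine: zero diagonal).\<close>
definition hess1 :: "nat \<Rightarrow> (nat set \<Rightarrow> real) \<Rightarrow> nat set \<Rightarrow> nat \<Rightarrow> nat \<Rightarrow> real" where
  "hess1 n \<pi> J i j = (if i = j \<or> i \<in> J \<or> j \<in> J then 0
                       else derivJ n \<pi> (insert i (insert j J)))"

text \<open>Hessian of log (d_J g_pi) at the all-ones vector:
  (nabla^2 p)/p - (nabla p)(nabla p)^T / p^2.  If d_J g_pi is the zero polynomial
  (p(1) = 0, nonneg coefficients) this is the zero matrix by the convention x/0 = 0,
  so the condition is vacuous, as intended.\<close>
definition loghess :: "nat \<Rightarrow> (nat set \<Rightarrow> real) \<Rightarrow> nat set \<Rightarrow> nat \<Rightarrow> nat \<Rightarrow> real" where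
  "loghess n \<pi> J i j = hess1 n \<pi> J i j / derivJ n \<pi> J
      - grad1 n \<pi> J i * grad1 n \<pi> J j / (derivJ n \<pi> J)^2"

definition strongly_log_concave :: "nat \<Rightarrow> (nat set \<Rightarrow> real) \<Rightarrow> bool" where
  "strongly_log_concave n \<pi> \<longleftrightarrow>
     (\<forall>S. 0 \<le> \<pi> S) \<and>
     (\<forall>J \<subseteq> ground n. \<forall>v :: nat \<Rightarrow> real.
        (\<Sum>i\<in>ground n. \<Sum>j\<in>ground n. v i * loghess n \<pi> J i j * v j) \<le> 0)"

definition homogeneous :: "nat \<Rightarrow> nat \<Rightarrow> (nat set \<Rightarrow> real) \<Rightarrow> bool" where
  "homogeneous n r \<pi> \<longleftrightarrow> (\<forall>S. \<pi> S \<noteq> 0 \<longrightarrow> S \<subseteq> ground n \<and> card S = r)"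

definition bases :: "(nat set \<Rightarrow> real) \<Rightarrow> nat set set" where
  "bases \<pi> = {B. \<pi> B \<noteq> 0}"

definition indep :: "(nat set \<Rightarrow> real) \<Rightarrow> nat set \<Rightarrow> bool" where
  "indep \<pi> I \<longleftrightarrow> (\<exists>B\<in>bases \<pi>. I \<subseteq> B)"

definition weight :: "nat \<Rightarrow> nat \<Rightarrow> real \<Rightarrow> (nat set \<Rightarrow> real) \<Rightarrow> nat set \<Rightarrow> real" where
  "weight n r Z \<pi> I = (if indep \<pi> I then
      fact (r - card I) * Z * (\<Sum>B\<in>{B \<in> bases \<pi>. I \<subseteq> B}. \<pi> B) else 0)"

definition link_dist :: "nat \<Rightarrow> nat \<Rightarrow> real \<Rightarrow> (nat set \<Rightarrow> real) \<Rightarrow> nat set \<Rightarrow> nat \<Rightarrow> real" where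
  "link_dist n r Z \<pi> I v = weight n r Z \<pi> (insert v I) / weight n r Z \<pi> I"

definition expect_link :: "nat \<Rightarrow> nat \<Rightarrow> real \<Rightarrow> (nat set \<Rightarrow> real) \<Rightarrow> nat set \<Rightarrow> (nat \<Rightarrow> real) \<Rightarrow> real" where
  "expect_link n r Z \<pi> I f = (\<Sum>v\<in>ground n - I. link_dist n r Z \<pi> I v * f v)"

definition Wmat :: "nat \<Rightarrow> nat \<Rightarrow> real \<Rightarrow> (nat set \<Rightarrow> real) \<Rightarrow> nat set \<Rightarrow> nat \<Rightarrow> nat \<Rightarrow> real" where
  "Wmat n r Z \<pi> I u v = (if u = v then 0 else weight n r Z \<pi> (insert u (insert v I)))"

definition quad_W :: "nat \<Rightarrow> nat \<Rightarrow> real \<Rightarrow> (nat set \<Rightarrow> real) \<Rightarrow> nat set \<Rightarrow> (nat \<Rightarrow> real) \<Rightarrow> real" where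
  "quad_W n r Z \<pi> I f = (\<Sum>u\<in>ground n - I. \<Sum>v\<in>ground n - I. f u * Wmat n r Z \<pi> I u v * f v)"

end

theory Submission imports Defs begin

lemma weight_eq:
  assumes hom: "homogeneous n r \<pi>"
  shows "weight n r Z \<pi> X = fact (r - card X) * Z * derivJ n \<pi> X"
proof -
  have sub: "{B \<in> bases \<pi>. X \<subseteq> B} \<subseteq> {S. S \<subseteq> ground n \<and> X \<subseteq> S}"
    using hom by (auto simp: bases_def homogeneous_def)
  have fin: "finite {S. S \<subseteq> ground n \<and> X \<subseteq> S}"
    by (rule finite_subset[of _ "Pow (ground n)"]) (auto simp: ground_def)
  have eq: "(\<Sum>B\<in>{B \<in> bases \<pi>. X \<subseteq> B}. \<pi> B) = derivJ n \<pi> X"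
    unfolding derivJ_def
    by (rule sum.mono_neutral_left[OF fin sub]) (auto simp: bases_def)
  show ?thesis
  proof (cases "indep \<pi> X")
    case True
    then show ?thesis using eq by (simp add: weight_def)
  next
    case False
    then have "{B \<in> bases \<pi>. X \<subseteq> B} = {}" by (auto simp: indep_def)
    then have "derivJ n \<pi> X = 0" using eq by (metis sum.empty)
    then show ?thesis using False by (simp add: weight_def)
  qed
qed

lemma euler:
  assumes hom: "homogeneous n r \<pi>"
  shows "(\<Sum>v\<in>ground n - J. derivJ n \<pi> (insert v J)) = real (r - card J) * derivJ n \<pi> J"
proof -
  define A where "A = {S. S \<subseteq> ground n \<and> J \<subseteq> S}"
  have fin: "finite A"
    unfolding A_def by (rule finite_subset[of _ "Pow (ground n)"]) (auto simp: ground_def)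
  have finG: "finite (ground n)" by (simp add: ground_def)
  have "(\<Sum>v\<in>ground n - J. derivJ n \<pi> (insert v J))
      = (\<Sum>v\<in>ground n - J. \<Sum>S\<in>A. if v \<in> S then \<pi> S else 0)"
  proof (rule sum.cong[OF refl])
    fix v assume v: "v \<in> ground n - J"
    have "{S. S \<subseteq> ground n \<and> insert v J \<subseteq> S} = {S\<in>A. v \<in> S}"
      by (auto simp: A_def)
    then show "derivJ n \<pi> (insert v J) = (\<Sum>S\<in>A. if v \<in> S then \<pi> S else 0)"
      unfolding derivJ_def using sum.inter_filter[OF fin, of \<pi> "\<lambda>S. v \<in> S"] by simp
  qed
  also have "\<dots> = (\<Sum>S\<in>A. \<Sum>v\<in>ground n - J. if v \<in> S then \<pi> S else 0)"
    by (rule sum.swap)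
  also have "\<dots> = (\<Sum>S\<in>A. real (r - card J) * \<pi> S)"
  proof (rule sum.cong[OF refl])
    fix S assume S: "S \<in> A"
    have "(\<Sum>v\<in>ground n - J. if v \<in> S then \<pi> S else 0) = (\<Sum>v\<in>(ground n - J) \<inter> S. \<pi> S)"
      using sum.inter_filter[of "ground n - J" "\<lambda>_. \<pi> S" "\<lambda>v. v \<in> S"] finG
      by (simp add: Int_def)
    also have "\<dots> = real (card ((ground n - J) \<inter> S)) * \<pi> S" by simp
    also have "\<dots> = real (r - card J) * \<pi> S"
    proof (cases "\<pi> S = 0")
      case False
      with hom have cS: "card S = r" and SG: "S \<subseteq> ground n" by (auto simp: homogeneous_def)
      have fS: "finite S" using SG finG finite_subset by blast
      have "(ground n - J) \<inter> S = S - J" using SG by auto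
      moreover have "card (S - J) = card S - card J"
        using S fS by (auto simp: A_def card_Diff_subset finite_subset)
      ultimately show ?thesis using cS by simp
    qed simp
    finally show "(\<Sum>v\<in>ground n - J. if v \<in> S then \<pi> S else 0) = real (r - card J) * \<pi> S" .
  qed
  also have "\<dots> = real (r - card J) * derivJ n \<pi> J"
    by (simp add: derivJ_def A_def sum_distrib_left)
  finally show ?thesis .
qed


theorem lemma2p4:
  fixes n r :: nat and Z :: real and \<pi> :: "nat set \<Rightarrow> real"
    and I :: "nat set" and f :: "nat \<Rightarrow> real"
  assumes "homogeneous n r \<pi>"
    and "strongly_log_concave n \<pi>"
    and "(\<Sum>S\<in>Pow (ground n). \<pi> S) = 1"
    and "Z > 0"
    and "indep \<pi> I"
    and "card I + 2 \<le> r"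
    and "expect_link n r Z \<pi> I f = 1"
  shows "quad_W n r Z \<pi> I f \<le> weight n r Z \<pi> I"
proof -
  note hom = assms(1)
  have nonneg: "\<And>S. 0 \<le> \<pi> S" and slc: "\<And>v. (\<Sum>i\<in>ground n. \<Sum>j\<in>ground n. v i * loghess n \<pi> I i j * v j) \<le> 0"
    using assms(2) assms(5) hom unfolding strongly_log_concave_def indep_def bases_def homogeneous_def
    by blast+
  define G where "G = ground n"
  define A where "A = G - I"
  define k where "k = r - card I"
  define p where "p = derivJ n \<pi> I"
  define g where "g = (\<lambda>i. derivJ n \<pi> (insert i I))"
  define h where "h = (\<lambda>i j. hess1 n \<pi> I i j)"
  define d where "d = (\<lambda>i. f i - 1)"
  have finG: "finite G" by (simp add: G_def ground_def)
  have finA: "finite A" using finG by (simp add: A_def)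
  obtain B where B: "\<pi> B \<noteq> 0" "I \<subseteq> B" using assms(5) by (auto simp: indep_def bases_def)
  have BG: "B \<subseteq> G" using B hom by (auto simp: homogeneous_def G_def)
  have IG: "I \<subseteq> G" using B BG by auto
  have finI: "finite I" using finite_subset[OF IG finG] .
  have finD: "finite {S. S \<subseteq> ground n \<and> I \<subseteq> S}"
    by (rule finite_subset[of _ "Pow (ground n)"]) (auto simp: ground_def)
  have "\<pi> B \<le> p" unfolding p_def derivJ_def
    by (rule member_le_sum) (use B BG nonneg finD in \<open>auto simp: G_def\<close>)
  then have ppos: "p > 0" using B nonneg[of B] by linarith
  have k2: "k \<ge> 2" using assms(6) by (simp add: k_def)
  have wI: "weight n r Z \<pi> I = fact k * Z * p"
    by (simp add: weight_eq[OF hom] k_def p_def)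
  have wv: "weight n r Z \<pi> (insert v I) = fact (k-1) * Z * g v" if "v \<in> A" for v
    using that finI by (simp add: weight_eq[OF hom] k_def g_def A_def)
  have wuv: "weight n r Z \<pi> (insert u (insert v I)) = fact (k-2) * Z * h u v"
    if "u \<in> A" "v \<in> A" "u \<noteq> v" for u v
    using that finI by (simp add: weight_eq[OF hom] k_def h_def A_def hess1_def)
  have hdiag: "h i i = 0" for i by (simp add: h_def hess1_def)
  have hsym: "h i j = h j i" for i j by (simp add: h_def hess1_def insert_commute conj_commute disj_commute)
  have factk: "fact k = real k * fact (k-1)" using k2 fact_reduce[of k] by simp
  have factk1: "fact (k-1) = real (k-1) * fact (k-2)"
  proof -
    obtain m where m: "k = Suc (Suc m)" using k2 by (metis add_2_eq_Suc le_Suc_ex)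
    show ?thesis unfolding m by (simp del: of_nat_Suc)
  qed
  have Sgf: "(\<Sum>v\<in>A. g v * f v) = real k * p"
  proof -
    have "1 = (\<Sum>v\<in>A. (fact (k-1) * Z * g v) / (fact k * Z * p) * f v)"
      using assms(7) wv wI unfolding expect_link_def link_dist_def A_def G_def
      by (metis (no_types, lifting) sum.cong)
    also have "\<dots> = (\<Sum>v\<in>A. g v * f v) / (real k * p)"
      using assms(4) k2 by (simp add: factk sum_divide_distrib field_simps)
    finally show ?thesis using ppos k2 by (simp add: field_simps)
  qed
  have Sg: "(\<Sum>v\<in>A. g v) = real k * p"
    using euler[OF hom, of I] by (simp add: A_def G_def g_def k_def p_def)
  have Sgd: "(\<Sum>v\<in>A. g v * d v) = 0"
    using Sgf Sg by (simp add: d_def right_diff_distrib sum_subtractf)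
  have Sh: "(\<Sum>j\<in>A. h i j) = real (k-1) * g i" if i: "i \<in> A" for i
  proof -
    have "(\<Sum>j\<in>A. h i j) = (\<Sum>j\<in>A - {i}. h i j)"
      using finA i hdiag by (simp add: sum.remove)
    also have "\<dots> = (\<Sum>j\<in>G - insert i I. derivJ n \<pi> (insert j (insert i I)))"
      by (rule sum.cong) (use i in \<open>auto simp: A_def h_def hess1_def insert_commute\<close>)
    also have "\<dots> = real (r - card (insert i I)) * g i"
      using euler[OF hom, of "insert i I"] by (simp add: G_def g_def)
    also have "r - card (insert i I) = k - 1" using i finI by (simp add: A_def k_def)
    finally show ?thesis .
  qed
  define D where "D = (\<Sum>i\<in>A. \<Sum>j\<in>A. d i * h i j * d j)"
  have Dle: "D \<le> 0"
  proof -
    have lh: "loghess n \<pi> I i j = h i j / p - g i * g j / p^2" if "i \<in> A" "j \<in> A" for i j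
      using that by (simp add: loghess_def h_def g_def p_def grad1_def A_def)
    have "(\<Sum>i\<in>G. \<Sum>j\<in>G. d i * loghess n \<pi> I i j * d j)
        = (\<Sum>i\<in>A. \<Sum>j\<in>A. d i * loghess n \<pi> I i j * d j)"
    proof -
      have z: "loghess n \<pi> I i j = 0" if "i \<in> I \<or> j \<in> I" for i j
        using that by (auto simp: loghess_def hess1_def grad1_def)
      have "(\<Sum>i\<in>G. \<Sum>j\<in>G. d i * loghess n \<pi> I i j * d j)
          = (\<Sum>i\<in>G. \<Sum>j\<in>A. d i * loghess n \<pi> I i j * d j)"
        by (rule sum.cong[OF refl], rule sum.mono_neutral_right) (use finG z in \<open>auto simp: A_def\<close>)
      also have "\<dots> = (\<Sum>i\<in>A. \<Sum>j\<in>A. d i * loghess n \<pi> I i j * d j)"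
        by (rule sum.mono_neutral_right) (use finG z in \<open>auto simp: A_def\<close>)
      finally show ?thesis .
    qed
    also have "\<dots> = (\<Sum>i\<in>A. \<Sum>j\<in>A. d i * h i j * d j / p - (d i * g i / p^2) * (g j * d j))"
      by (rule sum.cong[OF refl], rule sum.cong[OF refl]) (simp add: lh algebra_simps diff_divide_distrib)
    also have "\<dots> = (\<Sum>i\<in>A. (\<Sum>j\<in>A. d i * h i j * d j) / p)"
      by (rule sum.cong[OF refl]) (simp add: sum_subtractf sum_divide_distrib[symmetric] sum_distrib_left[symmetric] Sgd)
    also have "\<dots> = D / p" by (simp add: D_def sum_divide_distrib)
    finally have "D / p \<le> 0" using slc[of d] by (simp add: G_def)
    then show ?thesis using ppos by (simp add: divide_le_0_iff)
  qed
  have quad: "quad_W n r Z \<pi> I f = fact (k-2) * Z * (\<Sum>i\<in>A. \<Sum>j\<in>A. f i * h i j * f j)"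
    unfolding quad_W_def sum_distrib_left
    by (rule sum.cong, simp add: A_def G_def, rule sum.cong, simp add: A_def G_def)
       (auto simp: Wmat_def wuv hdiag A_def G_def)
  have Q: "(\<Sum>i\<in>A. \<Sum>j\<in>A. f i * h i j * f j) = real k * real (k-1) * p + D"
  proof -
    have e: "f i * h i j * f j = h i j + d i * h i j + h j i * d j + d i * h i j * d j" for i j
      by (simp add: d_def hsym[of j i] algebra_simps)
    have s1: "(\<Sum>i\<in>A. \<Sum>j\<in>A. h i j) = real k * real (k-1) * p"
    proof -
      have "(\<Sum>i\<in>A. \<Sum>j\<in>A. h i j) = (\<Sum>i\<in>A. real (k-1) * g i)"
        by (rule sum.cong[OF refl]) (simp add: Sh)
      also have "\<dots> = real (k-1) * (real k * p)"
        by (simp only: sum_distrib_left[symmetric] Sg)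
      finally show ?thesis by simp
    qed
    have s2: "(\<Sum>i\<in>A. \<Sum>j\<in>A. d i * h i j) = 0"
    proof -
      have "(\<Sum>i\<in>A. \<Sum>j\<in>A. d i * h i j) = (\<Sum>i\<in>A. real (k-1) * (g i * d i))"
        by (rule sum.cong[OF refl]) (simp add: sum_distrib_left[symmetric] Sh)
      then show ?thesis by (simp add: sum_distrib_left[symmetric] Sgd)
    qed
    have s3: "(\<Sum>i\<in>A. \<Sum>j\<in>A. h j i * d j) = 0"
      using s2 sum.swap[of "\<lambda>i j. h j i * d j" A A] by (simp add: mult.commute)
    show ?thesis
      by (simp add: e sum.distrib s1 s2 s3 D_def)
  qed
  have "quad_W n r Z \<pi> I f \<le> fact (k-2) * Z * (real k * real (k-1) * p)"
    unfolding quad Q using Dle assms(4) by (simp add: mult_left_mono)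
  also have "\<dots> = weight n r Z \<pi> I" unfolding wI factk factk1 by (simp only: mult_ac)
  finally show ?thesis .
qed

end
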